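(* Let $\alpha=(x,u')$ and $\beta=(y,v')$ be distinct non-collinear points of $\mathcal{S}$ such that either ($x=y$ and $u'\neq v'$) or ($x\neq y$ and $u'=v'$). Then $|\{\alpha,\beta\}^{\perp}|\geq 2$ in $\mathcal{S}$.
   Context: Let $S=(P,L)$ and $S'=(P',L')$ be generalized quadrangles of order $(2,2)$ (every line has 3 points, every point lies on 3 lines, and for each point $x$ and line $l\not\ni x$ exactly one point of $l$ is collinear with $x$), with an isomorphism $x\mapsto x'$ from $S$ to $S'$. In a point-line geometry, $x^{\perp}$ is $x$ together with all points collinear with $x$, and $A^{\perp}=\bigcap_{a\in A}a^{\perp}$. A triad is a set of three pairwise non-collinear points, complete if $|T^{\perp}|=3$. The geometry $\mathcal{S}=(\mathcal{P},\mathcal{L})$ has point set $\mathcal{P}=\{(x,y')\in P\times P':y'\in x'^{\perp}\}$ and lines all $3$-subsets $\{(x,u'),(y,v'),(z,w')\}$ of $\mathcal{P}$ where $T=\{x,y,z\}$ (three distinct points) is a line or a complete triad of $S$ and $\{u',v',w'\}=T'^{\perp}$ in $S'$ with $u',v',w'$ distinct. *)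

theory Defs
  imports Main
begin

definition collinear :: "'a set set \<Rightarrow> 'a \<Rightarrow> 'a \<Rightarrow> bool" where
  "collinear L x y \<longleftrightarrow> (\<exists>l\<in>L. x \<in> l \<and> y \<in> l)"

definition perp :: "'a set \<Rightarrow> 'a set set \<Rightarrow> 'a \<Rightarrow> 'a set" where
  "perp P L x = insert x {y \<in> P. collinear L x y}"

definition setperp :: "'a set \<Rightarrow> 'a set set \<Rightarrow> 'a set \<Rightarrow> 'a set" where
  "setperp P L A = {y \<in> P. \<forall>a\<in>A. y \<in> perp P L a}"

definition gq22 :: "'a set \<Rightarrow> 'a set set \<Rightarrow> bool" where
  "gq22 P L \<longleftrightarrow>
     (\<forall>l\<in>L. l \<subseteq> P \<and> card l = 3) \<and>
     (\<forall>x\<in>P. card {l\<in>L. x \<in> l} = 3) \<and>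
     (\<forall>x\<in>P. \<forall>l\<in>L. x \<notin> l \<longrightarrow> (\<exists>!y. y \<in> l \<and> collinear L x y))"

definition triad :: "'a set \<Rightarrow> 'a set set \<Rightarrow> 'a set \<Rightarrow> bool" where
  "triad P L T \<longleftrightarrow> T \<subseteq> P \<and> card T = 3 \<and>
     (\<forall>a\<in>T. \<forall>b\<in>T. a \<noteq> b \<longrightarrow> \<not> collinear L a b)"

definition complete_triad :: "'a set \<Rightarrow> 'a set set \<Rightarrow> 'a set \<Rightarrow> bool" where
  "complete_triad P L T \<longleftrightarrow> triad P L T \<and> card (setperp P L T) = 3"

definition geom_iso :: "'a set \<Rightarrow> 'a set set \<Rightarrow> 'b set \<Rightarrow> 'b set set \<Rightarrow> ('a \<Rightarrow> 'b) \<Rightarrow> bool" where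
  "geom_iso P L P' L' f \<longleftrightarrow> bij_betw f P P' \<and>
     (\<forall>l. l \<subseteq> P \<longrightarrow> (l \<in> L \<longleftrightarrow> f ` l \<in> L'))"

definition calP :: "'a set \<Rightarrow> 'b set \<Rightarrow> 'b set set \<Rightarrow> ('a \<Rightarrow> 'b) \<Rightarrow> ('a \<times> 'b) set" where
  "calP P P' L' f = {(x, y). x \<in> P \<and> y \<in> perp P' L' (f x)}"

definition calL :: "'a set \<Rightarrow> 'a set set \<Rightarrow> 'b set \<Rightarrow> 'b set set \<Rightarrow> ('a \<Rightarrow> 'b)
    \<Rightarrow> ('a \<times> 'b) set set" where
  "calL P L P' L' f =
    {{(x, u), (y, v), (z, w)} | x y z u v w.
       distinct [x, y, z] \<and>
       ({x, y, z} \<in> L \<or> complete_triad P L {x, y, z}) \<and>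
       distinct [u, v, w] \<and>
       {u, v, w} = setperp P' L' (f ` {x, y, z}) \<and>
       {(x, u), (y, v), (z, w)} \<subseteq> calP P P' L' f}"

end

theory Submission imports Defs begin

lemma card3_obtain1: assumes "card A = 3" "a \<in> A" shows "\<exists>b c. A = {a,b,c} \<and> distinct [a,b,c]"
proof -
  obtain x y z where xyz: "A = {x,y,z}" "x \<noteq> y" "y \<noteq> z" "x \<noteq> z" using assms(1) card_3_iff by metis
  have "a = x \<or> a = y \<or> a = z" using assms(2) xyz(1) by blast
  moreover have "a = x \<Longrightarrow> A = {a,y,z} \<and> distinct [a,y,z]" using xyz by simp
  moreover have "a = y \<Longrightarrow> A = {a,x,z} \<and> distinct [a,x,z]" using xyz by (simp add: insert_commute)
  moreover have "a = z \<Longrightarrow> A = {a,x,y} \<and> distinct [a,x,y]" using xyz by (simp add: insert_commute)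
  ultimately show ?thesis by blast
qed

lemma card3_obtain2: assumes "card A = 3" "a \<in> A" "b \<in> A" "a \<noteq> b"
  shows "\<exists>c. A = {a,b,c} \<and> distinct [a,b,c]"
proof -
  from card3_obtain1[OF assms(1,2)] obtain c d where cd: "A = {a,c,d}" "distinct [a,c,d]" by blast
  have "b \<in> {a,c,d}" using assms(3) cd(1) by blast
  then have "b = c \<or> b = d" using assms(4) by blast
  moreover have "b = c \<Longrightarrow> A = {a,b,d} \<and> distinct [a,b,d]" using cd by simp
  moreover have "b = d \<Longrightarrow> A = {a,b,c} \<and> distinct [a,b,c]" using cd by (auto simp: insert_commute)
  ultimately show ?thesis by blast
qed

locale gq = fixes P :: "'a set" and L :: "'a set set" assumes gq: "gq22 P L"
begin

lemma G1: "\<forall>l\<in>L. l \<subseteq> P \<and> card l = 3" using gq[unfolded gq22_def] by (rule conjunct1)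
lemma G2: "\<forall>x\<in>P. card {l\<in>L. x \<in> l} = 3" using gq[unfolded gq22_def] by (rule conjunct1[OF conjunct2])
lemma G3: "\<forall>x\<in>P. \<forall>l\<in>L. x \<notin> l \<longrightarrow> (\<exists>!y. y \<in> l \<and> collinear L x y)"
  using gq[unfolded gq22_def] by (rule conjunct2[OF conjunct2])
lemma line_sub: "l \<in> L \<Longrightarrow> l \<subseteq> P" using G1 by simp
lemma line_card: "l \<in> L \<Longrightarrow> card l = 3" using G1 by simp
lemma line_fin: "l \<in> L \<Longrightarrow> finite l" using line_card card.infinite by fastforce
lemma pt_lines: "x \<in> P \<Longrightarrow> card {l\<in>L. x\<in>l} = 3" using G2 by simp
lemma ex1u: "x \<in> P \<Longrightarrow> l \<in> L \<Longrightarrow> x \<notin> l \<Longrightarrow> \<exists>!y. y \<in> l \<and> collinear L x y"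
  using G3 by simp
lemma uniq: "x \<in> P \<Longrightarrow> l \<in> L \<Longrightarrow> x \<notin> l \<Longrightarrow> y1 \<in> l \<Longrightarrow> collinear L x y1 \<Longrightarrow> y2 \<in> l
   \<Longrightarrow> collinear L x y2 \<Longrightarrow> y1 = y2" using ex1u by metis
lemma exi: "x \<in> P \<Longrightarrow> l \<in> L \<Longrightarrow> x \<notin> l \<Longrightarrow> \<exists>y\<in>l. collinear L x y"
  using ex1u by metis
lemma coll_sym: "collinear L a b \<longleftrightarrow> collinear L b a" unfolding collinear_def by blast
lemma coll_symI: "collinear L a b \<Longrightarrow> collinear L b a" unfolding collinear_def by blast
lemma coll_P: "collinear L a b \<Longrightarrow> a \<in> P \<and> b \<in> P" using line_sub unfolding collinear_def by blast
lemma collI: "l \<in> L \<Longrightarrow> a \<in> l \<Longrightarrow> b \<in> l \<Longrightarrow> collinear L a b" unfolding collinear_def by blast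

lemma line_eq: assumes "l \<in> L" "m \<in> L" "a \<in> l" "a \<in> m" "b \<in> l" "b \<in> m" "a \<noteq> b" shows "l = m"
proof (rule ccontr)
  assume "l \<noteq> m"
  have "\<not> m \<subseteq> l"
  proof
    assume "m \<subseteq> l"
    then show False using card_subset_eq[OF line_fin[OF assms(1)]] line_card assms(1,2) \<open>l \<noteq> m\<close> by metis
  qed
  then obtain z where z: "z \<in> m" "z \<notin> l" by blast
  have "z \<in> P" using z line_sub assms by blast
  have "collinear L z a" "collinear L z b" using collI assms z by blast+
  then show False using uniq[OF \<open>z \<in> P\<close> assms(1) z(2) assms(3) _ assms(5)] assms(7) by blast
qed

lemma tri: assumes "l \<in> L" "a \<in> l" "b \<in> l" "a \<noteq> b" "collinear L c a" "collinear L c b" shows "c \<in> l"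
proof (rule ccontr)
  assume "c \<notin> l"
  have "c \<in> P" using coll_P assms by blast
  then show False using uniq[OF \<open>c \<in> P\<close> assms(1) \<open>c \<notin> l\<close> assms(2) assms(5) assms(3) assms(6)] assms(4) by blast
qed

lemma in_perp: "b \<in> perp P L a \<longleftrightarrow> b = a \<or> (b \<in> P \<and> collinear L a b)" unfolding perp_def by auto
lemma perp_sym: "a \<in> P \<Longrightarrow> b \<in> P \<Longrightarrow> b \<in> perp P L a \<longleftrightarrow> a \<in> perp P L b"
  by (auto simp: in_perp coll_sym)
lemma in_setperp: "y \<in> setperp P L A \<longleftrightarrow> y \<in> P \<and> (\<forall>a\<in>A. y \<in> perp P L a)"
  unfolding setperp_def by auto

lemma setperp_anti: "A \<subseteq> B \<Longrightarrow> setperp P L B \<subseteq> setperp P L A"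
  unfolding setperp_def by blast
lemma in_setperp3: "y \<in> setperp P L {a,b,c} \<longleftrightarrow> y \<in> P \<and> y \<in> perp P L a \<and> y \<in> perp P L b \<and> y \<in> perp P L c"
  unfolding setperp_def by simp
lemma triad3:
  assumes "a \<in> P" "b \<in> P" "c \<in> P" "a \<noteq> b" "a \<noteq> c" "b \<noteq> c"
    "\<not> collinear L a b" "\<not> collinear L a c" "\<not> collinear L b c"
  shows "triad P L {a,b,c}"
proof -
  have "\<not> collinear L b a" "\<not> collinear L c a" "\<not> collinear L c b" using assms(7-9) coll_symI by blast+
  then show ?thesis using assms unfolding triad_def by auto
qed
lemma setperp_line: assumes l: "l \<in> L" shows "setperp P L l = l"
proof
  show "l \<subseteq> setperp P L l" using l line_sub[OF l] collI[OF l] by (auto simp: in_setperp in_perp)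
  show "setperp P L l \<subseteq> l"
  proof
    fix z assume z: "z \<in> setperp P L l"
    show "z \<in> l"
    proof (rule ccontr)
      assume zl: "z \<notin> l"
      obtain a b c where abc: "l = {a,b,c}" "distinct [a,b,c]" using line_card[OF l] unfolding card_3_iff by auto
      have "z \<in> perp P L a" "z \<in> perp P L b" "z \<in> P" using z abc by (auto simp: in_setperp)
      then have "collinear L a z" "collinear L b z" using zl abc by (auto simp: in_perp)
      then have "collinear L z a" "collinear L z b" using coll_sym by blast+
      moreover have "a \<in> l" "b \<in> l" "a \<noteq> b" using abc by auto
      ultimately show False using uniq[OF \<open>z \<in> P\<close> l zl, of a b] by blast
    qed
  qed
qed


lemma perp2:
  assumes a: "a \<in> P" and b: "b \<in> P" and ab: "a \<noteq> b" and nc: "\<not> collinear L a b"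
  shows "card (setperp P L {a,b}) = 3"
    and "\<forall>p\<in>setperp P L {a,b}. \<forall>q\<in>setperp P L {a,b}. p \<noteq> q \<longrightarrow> \<not> collinear L p q"
proof -
  have nc': "\<not> collinear L b a" using nc coll_sym by blast
  define La where "La = {l\<in>L. a\<in>l}"
  define g where "g l = (THE y. y \<in> l \<and> collinear L b y)" for l
  have bl: "b \<notin> l" if "l \<in> La" for l using that nc collI unfolding La_def by blast
  have g: "g l \<in> l \<and> collinear L b (g l)" if "l \<in> La" for l
  proof -
    have "l \<in> L" using that unfolding La_def by blast
    then have "\<exists>!y. y \<in> l \<and> collinear L b y" using ex1u bl[OF that] b by blast
    then show ?thesis unfolding g_def by (rule theI')
  qed
  have ga: "g l \<noteq> a" if "l \<in> La" for l using g[OF that] nc coll_sym by metis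
  have S: "setperp P L {a,b} = g ` La"
  proof
    show "g ` La \<subseteq> setperp P L {a,b}"
    proof
      fix y assume "y \<in> g ` La"
      then obtain l where l: "l \<in> La" "y = g l" by blast
      have "y \<in> P" using l g line_sub unfolding La_def by blast
      moreover have "collinear L a y" using l g collI unfolding La_def by blast
      moreover have "collinear L b y" using l g by blast
      ultimately show "y \<in> setperp P L {a,b}" by (auto simp: in_setperp in_perp)
    qed
    show "setperp P L {a,b} \<subseteq> g ` La"
    proof
      fix d assume d: "d \<in> setperp P L {a,b}"
      then have dP: "d \<in> P" and da: "d \<in> perp P L a" and db: "d \<in> perp P L b" by (auto simp: in_setperp)
      have "d \<noteq> a" using db nc' ab by (auto simp: in_perp)
      then have "collinear L a d" using da by (auto simp: in_perp)
      then obtain l where l: "l \<in> L" "a \<in> l" "d \<in> l" unfolding collinear_def by blast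
      have "d \<noteq> b" using da nc ab by (auto simp: in_perp)
      then have "collinear L b d" using db by (auto simp: in_perp)
      have lLa: "l \<in> La" using l unfolding La_def by blast
      have "d = g l" using uniq[OF b l(1) bl[OF lLa] l(3) \<open>collinear L b d\<close>] g[OF lLa] by blast
      then show "d \<in> g ` La" using lLa by blast
    qed
  qed
  have inj: "inj_on g La"
  proof
    fix l m assume l: "l \<in> La" and m: "m \<in> La" and e: "g l = g m"
    have "l \<in> L" "m \<in> L" "a \<in> l" "a \<in> m" using l m unfolding La_def by auto
    moreover have "g l \<in> l" "g l \<in> m" "a \<noteq> g l" using g[OF l] g[OF m] ga[OF l] e by auto
    ultimately show "l = m" using line_eq[of l m a "g l"] by blast
  qed
  show "card (setperp P L {a,b}) = 3" using S card_image[OF inj] pt_lines[OF a] unfolding La_def by simp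
  show "\<forall>p\<in>setperp P L {a,b}. \<forall>q\<in>setperp P L {a,b}. p \<noteq> q \<longrightarrow> \<not> collinear L p q"
  proof (intro ballI impI notI)
    fix p q assume p: "p \<in> setperp P L {a,b}" and q: "q \<in> setperp P L {a,b}" and pq: "p \<noteq> q"
      and c: "collinear L p q"
    obtain l where l: "l \<in> L" "p \<in> l" "q \<in> l" using c unfolding collinear_def by blast
    have "p \<noteq> a" "q \<noteq> a" "p \<noteq> b" "q \<noteq> b" using p q nc nc' ab by (auto simp: in_setperp in_perp)
    then have "collinear L a p" "collinear L a q" "collinear L b p" "collinear L b q"
      using p q by (auto simp: in_setperp in_perp)
    then have "a \<in> l" "b \<in> l" using tri[OF l pq] by auto
    then show False using nc collI l by blast
  qed
qed


lemma perp2_triad: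
  assumes a: "a \<in> P" and b: "b \<in> P" and ab: "a \<noteq> b" and nc: "\<not> collinear L a b"
  shows "triad P L (setperp P L {a,b})"
  using perp2[OF assms] unfolding triad_def setperp_def by auto

lemma regular:
  assumes a: "a \<in> P" and b: "b \<in> P" and ab: "a \<noteq> b" and nc: "\<not> collinear L a b"
  shows "\<exists>p q r c. setperp P L {a,b} = {p,q,r} \<and> distinct [p,q,r] \<and> setperp P L {p,q,r} = {a,b,c}
     \<and> distinct [a,b,c] \<and> setperp P L {a,b,c} = {p,q,r} \<and> complete_triad P L {p,q,r}
     \<and> complete_triad P L {a,b,c}"
proof -
  have nc': "\<not> collinear L b a" using nc coll_sym by blast
  obtain p q r where S: "setperp P L {a,b} = {p,q,r}" "p \<noteq> q" "q \<noteq> r" "p \<noteq> r"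
    using perp2(1)[OF assms] card_3_iff by metis
  have pr: "p \<in> setperp P L {a,b}" "q \<in> setperp P L {a,b}" "r \<in> setperp P L {a,b}" using S(1) by auto
  have tr: "\<forall>x\<in>setperp P L {a,b}. \<forall>y\<in>setperp P L {a,b}. x \<noteq> y \<longrightarrow> \<not> collinear L x y"
    using perp2(2)[OF assms] .
  have npq: "\<not> collinear L p q" "\<not> collinear L p r" "\<not> collinear L q r"
    using tr pr S(2-4) by blast+
  have npq': "\<not> collinear L q p" "\<not> collinear L r p" "\<not> collinear L r q"
    using npq coll_sym by blast+
  have P3: "p \<in> P" "q \<in> P" "r \<in> P" using pr by (auto simp: in_setperp)
  have pa: "p \<in> perp P L a" "p \<in> perp P L b" "q \<in> perp P L a" "q \<in> perp P L b"
     "r \<in> perp P L a" "r \<in> perp P L b" using pr by (auto simp: in_setperp)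
  have ap: "a \<in> perp P L p" "b \<in> perp P L p" "a \<in> perp P L q" "b \<in> perp P L q"
     "a \<in> perp P L r" "b \<in> perp P L r" using pa perp_sym a b P3 by blast+
  have pna: "p \<noteq> a" "q \<noteq> a" "r \<noteq> a" "p \<noteq> b" "q \<noteq> b" "r \<noteq> b"
    using pa nc nc' ab by (auto simp: in_perp)
  have cap: "collinear L a p" "collinear L a q" "collinear L a r" "collinear L b p" "collinear L b q" "collinear L b r"
    using pa pna by (auto simp: in_perp)
  have card2: "card (setperp P L {p,q}) = 3" using perp2(1)[OF P3(1,2) S(2) npq(1)] .
  have tr2: "\<forall>x\<in>setperp P L {p,q}. \<forall>y\<in>setperp P L {p,q}. x \<noteq> y \<longrightarrow> \<not> collinear L x y"
    using perp2(2)[OF P3(1,2) S(2) npq(1)] .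
  have abS2: "a \<in> setperp P L {p,q}" "b \<in> setperp P L {p,q}" using ap a b by (auto simp: in_setperp)
  from card3_obtain2[OF card2 abS2 ab] obtain c where S2: "setperp P L {p,q} = {a,b,c}" "distinct [a,b,c]"
    by blast
  have cS2: "c \<in> setperp P L {p,q}" using S2 by auto
  have cP: "c \<in> P" and cp: "c \<in> perp P L p" and cq: "c \<in> perp P L q" using cS2 by (auto simp: in_setperp)
  have nac: "\<not> collinear L a c" "\<not> collinear L b c" using tr2 abS2 cS2 S2(2) by auto
  have claim: "c \<in> perp P L r"
  proof (rule ccontr)
    assume ncr: "c \<notin> perp P L r"
    then have "c \<noteq> r" and ncr1: "\<not> collinear L r c" using cP by (auto simp: in_perp)
    then have ncr2: "\<not> collinear L c r" using coll_sym by blast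
    have "c \<noteq> p" using cq npq' S(2) by (auto simp: in_perp)
    then have "collinear L p c" using cp by (auto simp: in_perp)
    then obtain lp where lp: "lp \<in> L" "p \<in> lp" "c \<in> lp" unfolding collinear_def by blast
    have "c \<noteq> q" using cp npq S(2) by (auto simp: in_perp)
    then have "collinear L q c" using cq by (auto simp: in_perp)
    then obtain lq where lq: "lq \<in> L" "q \<in> lq" "c \<in> lq" unfolding collinear_def by blast
    have "r \<notin> lp" using npq(2) collI lp by blast
    then obtain e where e: "e \<in> lp" "collinear L r e" using exi[OF P3(3) lp(1)] by blast
    have "r \<notin> lq" using npq(3) collI lq by blast
    then obtain e' where e': "e' \<in> lq" "collinear L r e'" using exi[OF P3(3) lq(1)] by blast
    have ep: "e \<noteq> p" "e \<noteq> c" "e' \<noteq> q" "e' \<noteq> c" using e e' npq' ncr1 by auto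
    have "a \<noteq> c" "b \<noteq> c" using S2(2) by auto
    have aln: "a \<notin> lp" "b \<notin> lp" "a \<notin> lq" "b \<notin> lq"
      using nac collI[OF lp(1) _ lp(3)] collI[OF lq(1) _ lq(3)] by blast+
    have pe: "p \<noteq> e" "q \<noteq> e'" using ep by auto
    have nae1: "\<not> collinear L a e"
    proof
      assume "collinear L a e"
      then have "a \<in> lp" by (rule tri[OF lp(1) lp(2) e(1) pe(1) cap(1)])
      then show False using aln(1) by blast
    qed
    have nae2: "\<not> collinear L b e"
    proof
      assume "collinear L b e"
      then have "b \<in> lp" by (rule tri[OF lp(1) lp(2) e(1) pe(1) cap(4)])
      then show False using aln(2) by blast
    qed
    have nae3: "\<not> collinear L a e'"
    proof
      assume "collinear L a e'"
      then have "a \<in> lq" by (rule tri[OF lq(1) lq(2) e'(1) pe(2) cap(2)])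
      then show False using aln(3) by blast
    qed
    have nae4: "\<not> collinear L b e'"
    proof
      assume "collinear L b e'"
      then have "b \<in> lq" by (rule tri[OF lq(1) lq(2) e'(1) pe(2) cap(5)])
      then show False using aln(4) by blast
    qed
    note nae = nae1 nae2 nae3 nae4
    have cra: "collinear L r a" "collinear L r b" using coll_symI cap(3,6) by auto
    obtain la where la: "la \<in> L" "r \<in> la" "a \<in> la" using cra(1) unfolding collinear_def by blast
    obtain lb where lb: "lb \<in> L" "r \<in> lb" "b \<in> lb" using cra(2) unfolding collinear_def by blast
    obtain le where le: "le \<in> L" "r \<in> le" "e \<in> le" using e(2) unfolding collinear_def by blast
    obtain le' where le': "le' \<in> L" "r \<in> le'" "e' \<in> le'" using e'(2) unfolding collinear_def by blast
    have dl1: "la \<noteq> lb"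
    proof
      assume "la = lb"
      then have "b \<in> la" using lb(3) by simp
      then show False using nc collI[OF la(1) la(3)] by blast
    qed
    have dl2: "la \<noteq> le"
    proof
      assume "la = le"
      then have "e \<in> la" using le(3) by simp
      then show False using nae(1) collI[OF la(1) la(3)] by blast
    qed
    have dl3: "lb \<noteq> le"
    proof
      assume "lb = le"
      then have "e \<in> lb" using le(3) by simp
      then show False using nae(2) collI[OF lb(1) lb(3)] by blast
    qed
    have dl4: "la \<noteq> le'"
    proof
      assume "la = le'"
      then have "e' \<in> la" using le'(3) by simp
      then show False using nae(3) collI[OF la(1) la(3)] by blast
    qed
    have dl5: "lb \<noteq> le'"
    proof
      assume "lb = le'"
      then have "e' \<in> lb" using le'(3) by simp
      then show False using nae(4) collI[OF lb(1) lb(3)] by blast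
    qed
    have "le = le'"
    proof (rule ccontr)
      assume "le \<noteq> le'"
      have sub: "{la,lb,le,le'} \<subseteq> {l\<in>L. r\<in>l}" using la(1,2) lb(1,2) le(1,2) le'(1,2) by simp
      have fin: "finite {l\<in>L. r\<in>l}" by (rule card_ge_0_finite) (simp add: pt_lines[OF P3(3)])
      have "card {la,lb,le,le'} = 4" using dl1 dl2 dl3 dl4 dl5 \<open>le \<noteq> le'\<close> by simp
      then show False using card_mono[OF fin sub] pt_lines[OF P3(3)] by simp
    qed
    have ce: "c \<noteq> e" "c \<noteq> e'" using ep by auto
    have "e \<noteq> e'"
    proof
      assume "e = e'"
      then have "e \<in> lq" using e'(1) by simp
      then have "lp = lq" by (rule line_eq[OF lp(1) lq(1) lp(3) lq(3) e(1) _ ce(1)])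
      then have "p \<in> lq" using lp(2) by simp
      then show False using npq(1) collI[OF lq(1) _ lq(2)] by blast
    qed
    have "e' \<in> le" using le'(3) \<open>le = le'\<close> by simp
    then have cee: "collinear L e' e" by (rule collI[OF le(1) _ le(3)])
    have "collinear L e' c" by (rule collI[OF lq(1) e'(1) lq(3)])
    then have "e' \<in> lp" by (rule tri[OF lp(1) lp(3) e(1) ce(1) _ cee])
    then have "lp = lq" by (rule line_eq[OF lp(1) lq(1) lp(3) lq(3) _ e'(1) ce(2)])
    then have "p \<in> lq" using lp(2) by simp
    then show False using npq(1) collI[OF lq(1) _ lq(2)] by blast
  qed
  have cr: "r \<in> perp P L c" using perp_sym[OF P3(3) cP] claim by simp
  have pc: "p \<in> perp P L c" "q \<in> perp P L c" using perp_sym[OF P3(1) cP] perp_sym[OF P3(2) cP] cp cq by simp_all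
  have E1: "setperp P L {p,q,r} = {a,b,c}"
  proof
    have "setperp P L {p,q,r} \<subseteq> setperp P L {p,q}" by (rule setperp_anti) blast
    then show "setperp P L {p,q,r} \<subseteq> {a,b,c}" using S2(1) by simp
    show "{a,b,c} \<subseteq> setperp P L {p,q,r}" using a b cP ap cp cq claim by (simp add: in_setperp3)
  qed
  have E2: "setperp P L {a,b,c} = {p,q,r}"
  proof
    have "setperp P L {a,b,c} \<subseteq> setperp P L {a,b}" by (rule setperp_anti) blast
    then show "setperp P L {a,b,c} \<subseteq> {p,q,r}" using S(1) by simp
    show "{p,q,r} \<subseteq> setperp P L {a,b,c}" using P3 pa pc cr by (simp add: in_setperp3)
  qed
  have T1: "triad P L {p,q,r}" by (rule triad3) (use P3 S(2-4) npq in auto)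
  have T2: "triad P L {a,b,c}" by (rule triad3) (use a b cP S2(2) nac nc in auto)
  have CT1: "complete_triad P L {p,q,r}" using T1 E1 S2(2) unfolding complete_triad_def by simp
  have CT2: "complete_triad P L {a,b,c}" using T2 E2 S(2-4) unfolding complete_triad_def by simp
  show ?thesis
    apply (rule exI[of _ p], rule exI[of _ q], rule exI[of _ r], rule exI[of _ c])
    using S(1) S(2-4) E1 S2(2) E2 CT1 CT2 by simp
qed


lemma perp_sub: "x \<in> P \<Longrightarrow> perp P L x \<subseteq> P" unfolding perp_def by auto

lemma perp_fin: assumes "n \<in> P" shows "finite (perp P L n)"
proof -
  have fam: "finite {l\<in>L. n\<in>l}" by (rule card_ge_0_finite) (simp add: pt_lines[OF assms])
  have "finite (\<Union>{l\<in>L. n\<in>l})" using fam line_fin by (intro finite_Union) auto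
  moreover have "perp P L n \<subseteq> insert n (\<Union>{l\<in>L. n\<in>l})" unfolding perp_def collinear_def by blast
  ultimately show ?thesis using finite_subset by blast
qed

lemma P_fin: assumes x0: "x0 \<in> P" shows "finite P"
proof -
  have "P \<subseteq> (\<Union>n\<in>perp P L x0. perp P L n)"
  proof
    fix z assume z: "z \<in> P"
    show "z \<in> (\<Union>n\<in>perp P L x0. perp P L n)"
    proof (cases "z \<in> perp P L x0")
      case True
      moreover have "z \<in> perp P L z" unfolding perp_def by simp
      ultimately show ?thesis by blast
    next
      case False
      then have "z \<noteq> x0" "\<not> collinear L x0 z" using z by (auto simp: in_perp)
      then have "card (setperp P L {x0,z}) = 3" using perp2(1)[OF x0 z] by simp
      then obtain n where n: "n \<in> setperp P L {x0,z}" using card_3_iff by fastforce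
      then have "n \<in> perp P L x0" "n \<in> perp P L z" "n \<in> P" by (auto simp: in_setperp)
      then have "z \<in> perp P L n" using perp_sym z by blast
      then show ?thesis using \<open>n \<in> perp P L x0\<close> by blast
    qed
  qed
  moreover have "finite (\<Union>n\<in>perp P L x0. perp P L n)"
    using perp_fin[OF x0] perp_fin perp_sub[OF x0] by (intro finite_UN_I) auto
  ultimately show ?thesis using finite_subset by blast
qed

lemma case1:
  assumes x: "x \<in> P" and u: "u \<in> perp P L x" and v: "v \<in> perp P L x" and uv: "u \<noteq> v"
  shows "\<exists>z t r. distinct [x,z,t] \<and> z \<in> P \<and> t \<in> P \<and> ({x,z,t} \<in> L \<or> complete_triad P L {x,z,t})
     \<and> setperp P L {x,z,t} = {u,v,r} \<and> distinct [u,v,r]"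
proof -
  have uP: "u \<in> P" and vP: "v \<in> P" using u v perp_sub[OF x] by auto
  show ?thesis
  proof (cases "collinear L u v")
    case True
    then obtain m where m: "m \<in> L" "u \<in> m" "v \<in> m" unfolding collinear_def by blast
    have "x \<in> m"
    proof (cases "x = u \<or> x = v")
      case True then show ?thesis using m by blast
    next
      case False
      then have "collinear L x u" "collinear L x v" using u v by (auto simp: in_perp)
      then show ?thesis by (rule tri[OF m(1) m(2) m(3) uv])
    qed
    from card3_obtain1[OF line_card[OF m(1)] this] obtain z t where zt: "m = {x,z,t}" "distinct [x,z,t]" by blast
    from card3_obtain2[OF line_card[OF m(1)] m(2) m(3) uv] obtain r where r: "m = {u,v,r}" "distinct [u,v,r]" by blast
    have "z \<in> P" "t \<in> P" using zt line_sub[OF m(1)] by auto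
    moreover have "{x,z,t} \<in> L" using zt m by simp
    moreover have "setperp P L {x,z,t} = {u,v,r}" using setperp_line[OF m(1)] zt r by simp
    ultimately show ?thesis
      apply - apply (rule exI[of _ z], rule exI[of _ t], rule exI[of _ r]) using zt r by simp
  next
    case False
    from regular[OF uP vP uv False] obtain p q r c where R: "setperp P L {u,v} = {p,q,r}" "distinct [p,q,r]"
      "setperp P L {p,q,r} = {u,v,c}" "distinct [u,v,c]" "complete_triad P L {p,q,r}" by blast
    have "x \<in> setperp P L {u,v}" using u v x uP vP perp_sym by (auto simp: in_setperp)
    then have "x \<in> {p,q,r}" using R(1) by simp
    moreover have "card {p,q,r} = 3" using R(2) by simp
    ultimately obtain z t where zt: "{p,q,r} = {x,z,t}" "distinct [x,z,t]" using card3_obtain1[of "{p,q,r}" x] by metis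
    have "{p,q,r} \<subseteq> P" using R(1) unfolding setperp_def by blast
    then have "z \<in> P" "t \<in> P" using zt by auto
    moreover have "complete_triad P L {x,z,t}" using R(5) zt by simp
    moreover have "setperp P L {x,z,t} = {u,v,c}" using R(3) zt by simp
    ultimately show ?thesis
      apply - apply (rule exI[of _ z], rule exI[of _ t], rule exI[of _ c]) using zt R(4) by simp
  qed
qed

lemma case2:
  assumes x: "x \<in> P" and y: "y \<in> P" and xy: "x \<noteq> y" and u: "u \<in> perp P L x" and u2: "u \<in> perp P L y"
  shows "\<exists>t p q. distinct [x,y,t] \<and> t \<in> P \<and> ({x,y,t} \<in> L \<or> complete_triad P L {x,y,t})
     \<and> setperp P L {x,y,t} = {u,p,q} \<and> distinct [u,p,q]"
proof (cases "collinear L x y")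
  case True
  then obtain m where m: "m \<in> L" "x \<in> m" "y \<in> m" unfolding collinear_def by blast
  have "u \<in> m"
  proof (cases "u = x \<or> u = y")
    case True then show ?thesis using m by blast
  next
    case False
    then have "collinear L x u" "collinear L y u" using u u2 by (auto simp: in_perp)
    then have "collinear L u x" "collinear L u y" using coll_symI by auto
    then show ?thesis by (rule tri[OF m(1) m(2) m(3) xy])
  qed
  from card3_obtain2[OF line_card[OF m(1)] m(2) m(3) xy] obtain t where t: "m = {x,y,t}" "distinct [x,y,t]" by blast
  from card3_obtain1[OF line_card[OF m(1)] \<open>u \<in> m\<close>] obtain p q where pq: "m = {u,p,q}" "distinct [u,p,q]" by blast
  have "t \<in> P" using t line_sub[OF m(1)] by auto
  moreover have "{x,y,t} \<in> L" using t m by simp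
  moreover have "setperp P L {x,y,t} = {u,p,q}" using setperp_line[OF m(1)] t pq by simp
  ultimately show ?thesis
    apply - apply (rule exI[of _ t], rule exI[of _ p], rule exI[of _ q]) using t pq by simp
next
  case False
  from regular[OF x y xy False] obtain p q r c where R: "setperp P L {x,y} = {p,q,r}" "distinct [p,q,r]"
    "distinct [x,y,c]" "setperp P L {x,y,c} = {p,q,r}" "complete_triad P L {x,y,c}" by blast
  have "u \<in> setperp P L {x,y}" using u u2 x perp_sub[OF x] by (auto simp: in_setperp)
  then have "u \<in> {p,q,r}" using R(1) by simp
  moreover have "card {p,q,r} = 3" using R(2) by simp
  ultimately obtain p' q' where pq: "{p,q,r} = {u,p',q'}" "distinct [u,p',q']" using card3_obtain1[of "{p,q,r}" u] by metis
  have "c \<in> P" using R(5) unfolding complete_triad_def triad_def by blast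
  then show ?thesis
    apply - apply (rule exI[of _ c], rule exI[of _ p'], rule exI[of _ q']) using R pq by simp
qed

end

lemma collI_gen: "l \<in> M \<Longrightarrow> a \<in> l \<Longrightarrow> b \<in> l \<Longrightarrow> collinear M a b" unfolding collinear_def by blast
lemma in_perpI: "y \<in> Q \<Longrightarrow> collinear M x y \<Longrightarrow> y \<in> perp Q M x" unfolding perp_def by blast
lemma in_setperp2I: "y \<in> Q \<Longrightarrow> y \<in> perp Q M a \<Longrightarrow> y \<in> perp Q M b \<Longrightarrow> y \<in> setperp Q M {a,b}"
  unfolding setperp_def by blast

locale two = S: gq P L + S': gq P' L' for P :: "'a set" and L and P' :: "'b set" and L' +
  fixes f :: "'a \<Rightarrow> 'b" assumes iso: "geom_iso P L P' L' f"
begin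

lemma f_inj: "inj_on f P" using iso unfolding geom_iso_def bij_betw_def by blast
lemma f_img: "f ` P = P'" using iso unfolding geom_iso_def bij_betw_def by blast
lemma line_iso: "T \<subseteq> P \<Longrightarrow> f ` T \<in> L' \<longleftrightarrow> T \<in> L" using iso unfolding geom_iso_def by blast

lemma coll_iso: assumes a: "a \<in> P" and b: "b \<in> P"
  shows "collinear L' (f a) (f b) \<longleftrightarrow> collinear L a b"
proof
  assume "collinear L a b"
  then obtain l where l: "l \<in> L" "a \<in> l" "b \<in> l" unfolding collinear_def by blast
  have "f ` l \<in> L'" using line_iso S.line_sub[OF l(1)] l(1) by blast
  then show "collinear L' (f a) (f b)" using l by (intro collI_gen[of "f ` l"]) auto
next
  assume "collinear L' (f a) (f b)"
  then obtain l' where l': "l' \<in> L'" "f a \<in> l'" "f b \<in> l'" unfolding collinear_def by blast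
  define l where "l = {z\<in>P. f z \<in> l'}"
  have "f ` l = l'" using S'.line_sub[OF l'(1)] f_img unfolding l_def by blast
  then have "l \<in> L" using line_iso[of l] l'(1) unfolding l_def by auto
  moreover have "a \<in> l" "b \<in> l" using a b l' unfolding l_def by auto
  ultimately show "collinear L a b" by (rule collI_gen)
qed

lemma perp_iso: assumes a: "a \<in> P" and b: "b \<in> P"
  shows "f b \<in> perp P' L' (f a) \<longleftrightarrow> b \<in> perp P L a"
proof -
  have "f b = f a \<longleftrightarrow> b = a" using f_inj a b inj_on_eq_iff by metis
  moreover have "f b \<in> P'" using f_img b by blast
  ultimately show ?thesis using coll_iso[OF a b] b unfolding perp_def by auto
qed

lemma setperp_iso: assumes T: "T \<subseteq> P" shows "setperp P' L' (f ` T) = f ` setperp P L T"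
proof
  show "f ` setperp P L T \<subseteq> setperp P' L' (f ` T)"
  proof
    fix y' assume "y' \<in> f ` setperp P L T"
    then obtain b where b: "b \<in> setperp P L T" "y' = f b" by blast
    have bP: "b \<in> P" using b unfolding setperp_def by blast
    have "\<forall>a\<in>T. f b \<in> perp P' L' (f a)" using b T perp_iso bP unfolding setperp_def by blast
    then show "y' \<in> setperp P' L' (f ` T)" using b f_img bP unfolding setperp_def by blast
  qed
  show "setperp P' L' (f ` T) \<subseteq> f ` setperp P L T"
  proof
    fix y' assume y': "y' \<in> setperp P' L' (f ` T)"
    then have "y' \<in> P'" unfolding setperp_def by blast
    then obtain b where b: "b \<in> P" "y' = f b" using f_img by blast
    have "\<forall>a\<in>T. b \<in> perp P L a" using y' b T perp_iso unfolding setperp_def by blast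
    then show "y' \<in> f ` setperp P L T" using b unfolding setperp_def by blast
  qed
qed

lemma ct_iso: assumes T: "T \<subseteq> P" and ct: "complete_triad P' L' (f ` T)" shows "complete_triad P L T"
proof -
  have injT: "inj_on f T" using f_inj T inj_on_subset by blast
  have "card T = 3" using ct card_image[OF injT] unfolding complete_triad_def triad_def by simp
  moreover have "\<forall>a\<in>T. \<forall>b\<in>T. a \<noteq> b \<longrightarrow> \<not> collinear L a b"
  proof (intro ballI impI)
    fix a b assume ab: "a \<in> T" "b \<in> T" "a \<noteq> b"
    then have "f a \<noteq> f b" using injT inj_on_eq_iff by metis
    then have "\<not> collinear L' (f a) (f b)" using ct ab unfolding complete_triad_def triad_def by blast
    then show "\<not> collinear L a b" using coll_iso ab T by blast
  qed
  moreover have "card (setperp P L T) = 3"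
  proof -
    have "setperp P L T \<subseteq> P" unfolding setperp_def by blast
    then have "inj_on f (setperp P L T)" using f_inj inj_on_subset by blast
    then have "card (setperp P L T) = card (setperp P' L' (f ` T))" using setperp_iso[OF T] card_image by metis
    then show ?thesis using ct unfolding complete_triad_def by simp
  qed
  ultimately show ?thesis using T unfolding complete_triad_def triad_def by blast
qed


lemma mkline:
  assumes a: "a1 \<in> P" "a2 \<in> P" "a3 \<in> P" "distinct [a1,a2,a3]"
    and T: "{a1,a2,a3} \<in> L \<or> complete_triad P L {a1,a2,a3}"
    and B: "setperp P' L' (f ` {a1,a2,a3}) = {b1,b2,b3}" "distinct [b1,b2,b3]"
  shows "(a1,b1) \<in> calP P P' L' f" "(a2,b2) \<in> calP P P' L' f" "(a3,b3) \<in> calP P P' L' f"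
    "collinear (calL P L P' L' f) (a1,b1) (a2,b2)" "collinear (calL P L P' L' f) (a1,b1) (a3,b3)"
proof -
  have "b1 \<in> setperp P' L' (f ` {a1,a2,a3})" "b2 \<in> setperp P' L' (f ` {a1,a2,a3})"
    "b3 \<in> setperp P' L' (f ` {a1,a2,a3})" using B(1) by auto
  then have "b1 \<in> perp P' L' (f a1)" "b2 \<in> perp P' L' (f a2)" "b3 \<in> perp P' L' (f a3)"
    unfolding setperp_def by auto
  then show c1: "(a1,b1) \<in> calP P P' L' f" and c2: "(a2,b2) \<in> calP P P' L' f" and c3: "(a3,b3) \<in> calP P P' L' f"
    using a unfolding calP_def by auto
  have "{(a1,b1),(a2,b2),(a3,b3)} \<in> calL P L P' L' f"
    unfolding calL_def mem_Collect_eq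
    apply (rule exI[of _ a1], rule exI[of _ a2], rule exI[of _ a3], rule exI[of _ b1], rule exI[of _ b2], rule exI[of _ b3])
    using a(4) T B c1 c2 c3 by simp
  then show "collinear (calL P L P' L' f) (a1,b1) (a2,b2)" "collinear (calL P L P' L' f) (a1,b1) (a3,b3)"
    by (auto intro: collI_gen)
qed

lemma calP_sub: "calP P P' L' f \<subseteq> P \<times> P'"
proof
  fix g assume "g \<in> calP P P' L' f"
  then obtain a b where g: "g = (a,b)" "a \<in> P" "b \<in> perp P' L' (f a)" unfolding calP_def by blast
  have "f a \<in> P'" using f_img g by blast
  then show "g \<in> P \<times> P'" using g S'.perp_sub by blast
qed

lemma pull:
  assumes "z' \<in> P'" shows "inv_into P f z' \<in> P" "f (inv_into P f z') = z'"
  using assms f_img inv_into_into f_inv_into_f by metis+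

lemma main:
  assumes xu: "(x,u) \<in> calP P P' L' f" and yv: "(y,v) \<in> calP P P' L' f"
    and c: "(x = y \<and> u \<noteq> v) \<or> (x \<noteq> y \<and> u = v)"
  shows "card (setperp (calP P P' L' f) (calL P L P' L' f) {(x,u),(y,v)}) \<ge> 2"
proof -
  let ?CP = "calP P P' L' f" and ?CL = "calL P L P' L' f"
  let ?SP = "setperp ?CP ?CL {(x,u),(y,v)}"
  have xP: "x \<in> P" and u: "u \<in> perp P' L' (f x)" using xu unfolding calP_def by auto
  have yP: "y \<in> P" and v: "v \<in> perp P' L' (f y)" using yv unfolding calP_def by auto
  have fxP: "f x \<in> P'" and fyP: "f y \<in> P'" using f_img xP yP by auto
  have "finite (P \<times> P')" using S.P_fin[OF xP] S'.P_fin[OF fxP] by simp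
  then have finCP: "finite ?CP" using calP_sub finite_subset by blast
  have "?SP \<subseteq> ?CP" unfolding setperp_def by blast
  then have finSP: "finite ?SP" using finCP finite_subset by blast
  have suff: "2 \<le> card ?SP" if "g1 \<in> ?SP" "g2 \<in> ?SP" "g1 \<noteq> g2" for g1 g2
  proof -
    have "card {g1,g2} = 2" using that by simp
    moreover have "{g1,g2} \<subseteq> ?SP" using that by blast
    ultimately show ?thesis using card_mono[OF finSP] by metis
  qed
  have inSP: "g \<in> ?SP" if "g \<in> ?CP" "collinear ?CL (x,u) g" "collinear ?CL (y,v) g" for g
    using that by (intro in_setperp2I in_perpI)
  show ?thesis
  proof (cases "x = y")
    case True
    then have uv: "u \<noteq> v" and vx: "v \<in> perp P' L' (f x)" using c v by auto
    from S'.case1[OF fxP u vx uv] obtain z' t' r where R: "distinct [f x, z', t']" "z' \<in> P'" "t' \<in> P'"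
      "{f x, z', t'} \<in> L' \<or> complete_triad P' L' {f x, z', t'}" "setperp P' L' {f x, z', t'} = {u,v,r}"
      "distinct [u,v,r]" by blast
    define z where "z = inv_into P f z'"
    define t where "t = inv_into P f t'"
    have zP: "z \<in> P" and fz: "f z = z'" using pull[OF R(2)] unfolding z_def by auto
    have tP: "t \<in> P" and ft: "f t = t'" using pull[OF R(3)] unfolding t_def by auto
    have fT: "f ` {x,z,t} = {f x, z', t'}" using fz ft by simp
    have TP: "{x,z,t} \<subseteq> P" using xP zP tP by simp
    have dT: "distinct [x,z,t]" using R(1) fz ft by auto
    have LT: "{x,z,t} \<in> L \<or> complete_triad P L {x,z,t}"
      using R(4) line_iso[OF TP] ct_iso[OF TP] fT by auto
    have SPT: "setperp P' L' (f ` {x,z,t}) = {u,v,r}" using R(5) fT by simp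
    have s1: "setperp P' L' (f ` {x,z,t}) = {u,r,v}" using SPT by (simp add: insert_commute)
    have s2: "setperp P' L' (f ` {x,z,t}) = {v,r,u}" using SPT by (simp add: insert_commute)
    have s4: "setperp P' L' (f ` {x,z,t}) = {v,u,r}" using SPT by (simp add: insert_commute)
    have d1: "distinct [u,r,v]" "distinct [v,r,u]" "distinct [v,u,r]" using R(6) by auto
    note M1 = mkline[OF xP zP tP dT LT s1 d1(1)]
    note M2 = mkline[OF xP zP tP dT LT s2 d1(2)]
    note M3 = mkline[OF xP zP tP dT LT SPT R(6)]
    note M4 = mkline[OF xP zP tP dT LT s4 d1(3)]
    have g1: "(z,r) \<in> ?SP" using inSP M1(2) M1(4) M2(4) True by simp
    have g2: "(t,r) \<in> ?SP" using inSP M3(3) M3(5) M4(5) True by simp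
    have "(z,r) \<noteq> (t,r)" using dT by simp
    then show ?thesis using suff g1 g2 by blast
  next
    case False
    then have uv: "u = v" using c by auto
    have fxy: "f x \<noteq> f y" using False f_inj xP yP inj_on_eq_iff by metis
    have vx: "u \<in> perp P' L' (f y)" using v uv by simp
    from S'.case2[OF fxP fyP fxy u vx] obtain t' p q where R: "distinct [f x, f y, t']" "t' \<in> P'"
      "{f x, f y, t'} \<in> L' \<or> complete_triad P' L' {f x, f y, t'}" "setperp P' L' {f x, f y, t'} = {u,p,q}"
      "distinct [u,p,q]" by blast
    define t where "t = inv_into P f t'"
    have tP: "t \<in> P" and ft: "f t = t'" using pull[OF R(2)] unfolding t_def by auto
    have fT: "f ` {x,y,t} = {f x, f y, t'}" using ft by simp
    have TP: "{x,y,t} \<subseteq> P" using xP yP tP by simp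
    have dT: "distinct [x,y,t]" using R(1) ft by auto
    have LT: "{x,y,t} \<in> L \<or> complete_triad P L {x,y,t}"
      using R(3) line_iso[OF TP] ct_iso[OF TP] fT by auto
    have sw: "{y,x,t} = {x,y,t}" by auto
    have dT': "distinct [y,x,t]" using dT by auto
    have LT': "{y,x,t} \<in> L \<or> complete_triad P L {y,x,t}" using LT sw by simp
    have SPT: "setperp P' L' (f ` {x,y,t}) = {u,p,q}" using R(4) fT by simp
    have s1: "setperp P' L' (f ` {x,y,t}) = {u,q,p}" using SPT by (simp add: insert_commute)
    have s1': "setperp P' L' (f ` {y,x,t}) = {u,q,p}" using s1 sw by simp
    have s2': "setperp P' L' (f ` {y,x,t}) = {u,p,q}" using SPT sw by simp
    have d1: "distinct [u,q,p]" using R(5) by auto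
    note M1 = mkline[OF xP yP tP dT LT s1 d1]
    note M2 = mkline[OF yP xP tP dT' LT' s1' d1]
    note M3 = mkline[OF xP yP tP dT LT SPT R(5)]
    note M4 = mkline[OF yP xP tP dT' LT' s2' R(5)]
    have g1: "(t,p) \<in> ?SP" using inSP M1(3) M1(5) M2(5) uv by simp
    have g2: "(t,q) \<in> ?SP" using inSP M3(3) M3(5) M4(5) uv by simp
    have "(t,p) \<noteq> (t,q)" using R(5) by simp
    then show ?thesis using suff g1 g2 by blast
  qed
qed

end

theorem lemma3p1:
  fixes P :: "'a set" and L :: "'a set set"
    and P' :: "'b set" and L' :: "'b set set" and f :: "'a \<Rightarrow> 'b"
    and x y :: 'a and u v :: 'b
  assumes "gq22 P L" and "gq22 P' L'" and "geom_iso P L P' L' f"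
    and "(x, u) \<in> calP P P' L' f" and "(y, v) \<in> calP P P' L' f"
    and "(x, u) \<noteq> (y, v)"
    and "\<not> collinear (calL P L P' L' f) (x, u) (y, v)"
    and "(x = y \<and> u \<noteq> v) \<or> (x \<noteq> y \<and> u = v)"
  shows "card (setperp (calP P P' L' f) (calL P L P' L' f) {(x, u), (y, v)}) \<ge> 2"
proof -
  interpret two P L P' L' f
    using assms(1-3) by (simp add: two_def two_axioms_def gq_def)
  show ?thesis using main assms(4,5,8) by blast
qed

end
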